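(* Let $\mathrm P$ be a probability measure on $\mathbb{R}^d$ whose support $\mathcal X$ is a compact convex set with nonempty interior and which has a density $p$ satisfying $\lambda\le p\le\Lambda$ on $\mathcal X$ for some constants $0<\lambda\le\Lambda$. Then $$\lim_{R\to1^-}\mathrm d_H\big(\nabla\psi(R\,\mathbb B_d),\mathcal X\big)=0,$$ where $\nabla\psi(R\,\mathbb B_d)=\{\nabla\psi(\mathbf u):\mathbf u\in R\,\mathbb B_d,\ \psi\text{ differentiable at }\mathbf u\}$.
   Context: $\mathbb{B}_d$ is the open unit ball of $\mathbb{R}^d$ and $R\,\mathbb B_d$ the open ball of radius $R$ centered at $\mathbf 0$. $\mathrm U_d$ is the spherical uniform distribution on $\mathbb B_d$ (density $u_d(\mathbf x)=\frac{1}{a_d|\mathbf x|^{d-1}}$ on $\mathbb B_d\setminus\{\mathbf 0\}$, $a_d=2\pi^{d/2}/\Gamma(d/2)$). $\psi$ is the convex lsc function on $\mathbb B_d$, normalized by $\psi(\mathbf 0)=0$, whose a.e. gradient pushes $\mathrm U_d$ forward to $\mathrm P$ (McCann); $\nabla\psi=\mathbf Q_\pm$ is the center-outward quantile function. $\mathrm d_H(A,B)=\max\{\sup_{\mathbf a\in A}\inf_{\mathbf b\in B}|\mathbf a-\mathbf b|,\sup_{\mathbf b\in B}\inf_{\mathbf a\in A}|\mathbf a-\mathbf b|\}$ is the Hausdorff distance. *)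

theory Defs
  imports "HOL-Analysis.Analysis" "HOL-Probability.Probability"
begin

definition sphere_area :: "nat \<Rightarrow> real" where
  "sphere_area d = 2 * pi powr (real d / 2) / Gamma (real d / 2)"

definition spherical_uniform :: "'a::euclidean_space measure" where
  "spherical_uniform = density lborel
     (\<lambda>x. indicator (ball 0 1 - {0}) x *
          ennreal (1 / (sphere_area DIM('a) * norm x ^ (DIM('a) - 1))))"

definition msupport :: "'a::metric_space measure \<Rightarrow> 'a set" where
  "msupport M = {x. \<forall>e>0. emeasure M (ball x e) > 0}"

definition lsc_on :: "'a::topological_space set \<Rightarrow> ('a \<Rightarrow> real) \<Rightarrow> bool" where
  "lsc_on S f \<longleftrightarrow> (\<forall>x\<in>S. \<forall>t. t < f x \<longrightarrow> (\<forall>\<^sub>F y in at x within S. t < f y))"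

text \<open>Gradient of a real function at a point of differentiability (0 elsewhere).\<close>
definition grad :: "('a::euclidean_space \<Rightarrow> real) \<Rightarrow> 'a \<Rightarrow> 'a" where
  "grad f u = (if f differentiable (at u)
               then (SOME g. (f has_derivative (\<lambda>h. g \<bullet> h)) (at u)) else 0)"

definition hausdorff_dist :: "'a::metric_space set \<Rightarrow> 'a set \<Rightarrow> ereal" where
  "hausdorff_dist A B =
     max (SUP a\<in>A. INF b\<in>B. ereal (dist a b)) (SUP b\<in>B. INF a\<in>A. ereal (dist a b))"

end

theory Submission imports Defs begin

lemma grad_has:
  fixes f :: "'a::euclidean_space \<Rightarrow> real"
  assumes "f differentiable (at u)"
  shows "(f has_derivative (\<lambda>h. grad f u \<bullet> h)) (at u)"
proof -
  obtain D where D: "(f has_derivative D) (at u)" using assms unfolding differentiable_def by blast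
  have lin: "linear D" using D has_derivative_linear by blast
  have "\<And>h. D h = h \<bullet> (\<Sum>i\<in>Basis. D i *\<^sub>R i)"
  proof -
    fix h
    have "D h = D h \<bullet> 1" by simp
    also have "\<dots> = (\<Sum>i\<in>Basis. (h\<bullet>i) * (D i \<bullet> 1))" by (rule Linear_Algebra.linear_componentwise[OF lin])
    also have "\<dots> = h \<bullet> (\<Sum>i\<in>Basis. D i *\<^sub>R i)" by (simp add: inner_sum_right mult.commute)
    finally show "D h = h \<bullet> (\<Sum>i\<in>Basis. D i *\<^sub>R i)" .
  qed
  then have "\<exists>g. (f has_derivative (\<lambda>h. g \<bullet> h)) (at u)"
    using D by (metis (no_types, lifting) ext inner_commute)
  then have "(f has_derivative (\<lambda>h. (SOME g. (f has_derivative (\<lambda>h. g \<bullet> h)) (at u)) \<bullet> h)) (at u)"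
    by (rule someI_ex)
  then show ?thesis unfolding grad_def using assms by simp
qed

lemma convex_tangent:
  fixes f :: "'a::euclidean_space \<Rightarrow> real"
  assumes cv: "convex_on S f" and S: "open S" "convex S" and u: "u \<in> S" and w: "w \<in> S"
    and d: "(f has_derivative (\<lambda>h. g \<bullet> h)) (at u)"
  shows "f w - f u \<ge> g \<bullet> (w - u)"
proof -
  define A where "A = {t::real. u + t *\<^sub>R (w - u) \<in> S}"
  define \<phi> where "\<phi> t = f (u + t *\<^sub>R (w - u))" for t
  have "A = (\<lambda>t. u + t *\<^sub>R (w - u)) -` S" unfolding A_def by auto
  then have oA: "open A"
    by (auto intro!: open_vimage S continuous_intros)
  have cA: "convex A" unfolding convex_alt
  proof (intro ballI allI impI)
    fix x y m :: real
    assume x: "x \<in> A" and y: "y \<in> A" and m: "0 \<le> m \<and> m \<le> 1"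
    have "u + ((1 - m) * x + m * y) *\<^sub>R (w - u) = (1 - m) *\<^sub>R (u + x *\<^sub>R (w - u)) + m *\<^sub>R (u + y *\<^sub>R (w - u))"
      by (simp add: algebra_simps)
    moreover have "(1 - m) *\<^sub>R (u + x *\<^sub>R (w - u)) + m *\<^sub>R (u + y *\<^sub>R (w - u)) \<in> S"
      using S(2) x y m unfolding A_def convex_alt by auto
    ultimately show "(1 - m) *\<^sub>R x + m *\<^sub>R y \<in> A" unfolding A_def by simp
  qed
  have cvA: "convex_on A \<phi>"
  proof (rule convex_onI[OF _ cA])
    fix m x y :: real
    assume m: "0 < m" "m < 1" and x: "x \<in> A" and y: "y \<in> A"
    have e: "u + ((1 - m) *\<^sub>R x + m *\<^sub>R y) *\<^sub>R (w - u) = (1 - m) *\<^sub>R (u + x *\<^sub>R (w - u)) + m *\<^sub>R (u + y *\<^sub>R (w - u))"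
      by (simp add: algebra_simps)
    show "\<phi> ((1 - m) *\<^sub>R x + m *\<^sub>R y) \<le> (1 - m) * \<phi> x + m * \<phi> y"
      unfolding \<phi>_def e using convex_onD[OF cv, of m] x y m unfolding A_def by auto
  qed
  have "0 \<in> A" "1 \<in> A" using u w unfolding A_def by auto
  have dd: "(\<phi> has_field_derivative (g \<bullet> (w - u))) (at 0 within A)"
  proof -
    have "((\<lambda>t. u + t *\<^sub>R (w - u)) has_derivative (\<lambda>t. t *\<^sub>R (w - u))) (at 0)"
      by (auto intro!: derivative_eq_intros)
    moreover have d': "(f has_derivative (\<lambda>h. g \<bullet> h)) (at ((\<lambda>t. u + t *\<^sub>R (w - u)) 0))"
      using d by simp
    ultimately have "((f \<circ> (\<lambda>t. u + t *\<^sub>R (w - u))) has_derivative ((\<lambda>h. g \<bullet> h) \<circ> (\<lambda>t. t *\<^sub>R (w - u)))) (at 0)"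
      by (rule diff_chain_at)
    then have "((\<lambda>t. f (u + t *\<^sub>R (w - u))) has_derivative (\<lambda>t. g \<bullet> (t *\<^sub>R (w - u)))) (at 0)"
      by (simp add: o_def)
    then have "((\<lambda>t. f (u + t *\<^sub>R (w - u))) has_derivative (\<lambda>t. (g \<bullet> (w - u)) * t)) (at 0)"
      by (simp add: mult.commute)
    then show ?thesis unfolding \<phi>_def has_field_derivative_def
      by (rule has_derivative_at_withinI)
  qed
  have "\<phi> 1 - \<phi> 0 \<ge> g \<bullet> (w - u) * (1 - 0)"
    by (rule convex_on_imp_above_tangent[OF cvA convex_connected[OF cA]])
       (use oA \<open>0 \<in> A\<close> \<open>1 \<in> A\<close> dd interior_open in auto)
  then show ?thesis unfolding \<phi>_def by simp
qed


lemma emeasure_distr_raw: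
  assumes "emeasure (distr M N f) (space N) \<noteq> 0" "B \<in> sets N"
  shows "emeasure (distr M N f) B = emeasure M (f -` B \<inter> space M)"
proof -
  have ms: "measure_space (space N) (sigma_sets (space N) (sets N)) (\<lambda>A. emeasure M (f -` A \<inter> space M))"
    using assms(1) unfolding distr_def emeasure_measure_of_conv by (auto split: if_splits)
  have "B \<in> sigma_sets (space N) (sets N)" using assms(2) by (rule sigma_sets.Basic)
  then show ?thesis using ms unfolding distr_def emeasure_measure_of_conv by simp
qed

lemma msupport_compl_null:
  fixes P :: "'a::euclidean_space measure"
  assumes sP: "sets P = sets borel" and cl: "closed (msupport P)"
  shows "emeasure P (- msupport P) = 0"
proof -
  obtain \<B> :: "'a set set" where B: "countable \<B>" "\<And>C. C \<in> \<B> \<Longrightarrow> open C"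
    "\<And>S. open S \<Longrightarrow> \<exists>U. U \<subseteq> \<B> \<and> S = \<Union>U"
    using univ_second_countable by blast
  define N where "N = (\<Union>C\<in>{C\<in>\<B>. emeasure P C = 0}. C)"
  have "N \<in> null_sets P" unfolding N_def
  proof (rule null_sets_UN')
    show "countable {C\<in>\<B>. emeasure P C = 0}" using B(1) by simp
    fix C assume "C \<in> {C\<in>\<B>. emeasure P C = 0}"
    then show "C \<in> null_sets P" using B(2) sP by (auto intro!: null_setsI)
  qed
  moreover have "- msupport P \<subseteq> N"
  proof
    fix x assume "x \<in> - msupport P"
    then obtain e where e: "e > 0" "\<not> emeasure P (ball x e) > 0" unfolding msupport_def by auto
    then have e0: "emeasure P (ball x e) = 0" by (simp add: not_gr_zero)
    obtain U where U: "U \<subseteq> \<B>" "ball x e = \<Union>U" using B(3)[of "ball x e"] by auto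
    then obtain C where C: "C \<in> U" "x \<in> C" using e(1) by (metis UnionE centre_in_ball)
    have "C \<subseteq> ball x e" using U C by auto
    moreover have "C \<in> sets P" using B(2) U C sP by auto
    ultimately have "emeasure P C \<le> emeasure P (ball x e)"
      using sP by (intro emeasure_mono) auto
    then have "emeasure P C = 0" using e0 by simp
    then show "x \<in> N" unfolding N_def using U C by auto
  qed
  moreover have "- msupport P \<in> sets P" using cl sP by auto
  ultimately show ?thesis by (meson null_sets_subset null_setsD1)
qed

lemma sphere_area_pos: "n > 0 \<Longrightarrow> sphere_area n > 0"
  unfolding sphere_area_def by (auto intro!: divide_pos_pos Gamma_real_pos)

lemma su_dens_meas:
  "(\<lambda>x::'a::euclidean_space. indicator (ball 0 1 - {0}) x *
          ennreal (1 / (sphere_area DIM('a) * norm x ^ (DIM('a) - 1)))) \<in> borel_measurable lborel"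
proof -
  have "ball (0::'a) 1 - {0} \<in> sets lborel" by auto
  moreover have "(\<lambda>x::'a. ennreal (1 / (sphere_area DIM('a) * norm x ^ (DIM('a) - 1)))) \<in> borel_measurable lborel"
    by (intro measurable_compose[OF _ measurable_ennreal] borel_measurable_divide borel_measurable_times
        borel_measurable_power borel_measurable_const borel_measurable_norm measurable_ident_sets) auto
  ultimately show ?thesis by (intro borel_measurable_times_ennreal borel_measurable_indicator) auto
qed

lemma su_space: "space (spherical_uniform :: 'a::euclidean_space measure) = UNIV"
  and su_sets: "sets (spherical_uniform :: 'a::euclidean_space measure) = sets borel"
  unfolding spherical_uniform_def by auto

lemma su_ball: "AE x in (spherical_uniform :: 'a::euclidean_space measure). x \<in> ball 0 1"
  unfolding spherical_uniform_def
  by (subst AE_density[OF su_dens_meas]) (auto split: split_indicator)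

lemma su_pos:
  fixes c :: "'a::euclidean_space"
  assumes r: "0 < r" and sub: "ball c r \<subseteq> ball 0 1"
  shows "emeasure (spherical_uniform :: 'a measure) (ball c r) > 0"
proof -
  define k where "k = 1 / sphere_area DIM('a)"
  have k: "k > 0" unfolding k_def using sphere_area_pos[of "DIM('a)"] by auto
  have "emeasure (spherical_uniform :: 'a measure) (ball c r) =
     (\<integral>\<^sup>+ x. (indicator (ball 0 1 - {0}) x *
          ennreal (1 / (sphere_area DIM('a) * norm x ^ (DIM('a) - 1)))) * indicator (ball c r) x \<partial>lborel)"
    unfolding spherical_uniform_def by (rule emeasure_density[OF su_dens_meas]) auto
  also have "\<dots> \<ge> (\<integral>\<^sup>+ x. ennreal k * indicator (ball c r - {0}) x \<partial>lborel)"
  proof (rule nn_integral_mono)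
    fix x :: 'a
    show "ennreal k * indicator (ball c r - {0}) x \<le> indicator (ball 0 1 - {0}) x *
          ennreal (1 / (sphere_area DIM('a) * norm x ^ (DIM('a) - 1))) * indicator (ball c r) x"
    proof (cases "x \<in> ball c r - {0}")
      case True
      then have x: "x \<in> ball 0 1 - {0}" using sub by auto
      then have n: "0 < norm x" "norm x < 1" by auto
      have "norm x ^ (DIM('a) - 1) \<le> 1" using n by (simp add: power_le_one)
      moreover have "norm x ^ (DIM('a) - 1) > 0" using n by simp
      ultimately have "k \<le> 1 / (sphere_area DIM('a) * norm x ^ (DIM('a) - 1))"
        unfolding k_def using sphere_area_pos[of "DIM('a)"]
        by (simp add: divide_simps mult_le_cancel_left1)
      then show ?thesis using True x by (auto intro: ennreal_leI)
    qed auto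
  qed
  finally have 1: "emeasure (spherical_uniform :: 'a measure) (ball c r) \<ge> ennreal k * emeasure lborel (ball c r - {0})"
    by (subst (asm) nn_integral_cmult_indicator) auto
  have "emeasure lborel (ball c r - {0}) = emeasure lborel (ball c r)"
    by (rule emeasure_Diff_null_set) (auto intro: finite_imp_null_set_lborel)
  also have "\<dots> = ennreal (measure lborel (ball c r))"
    using emeasure_lborel_ball_finite[of c r] by (intro emeasure_eq_ennreal_measure) auto
  also have "\<dots> > 0" using r by simp
  finally have "ennreal k * emeasure lborel (ball c r - {0}) > 0"
    using k by (simp add: ennreal_zero_less_mult_iff)
  then show ?thesis using 1 by (rule less_le_trans)
qed


theorem lemma3p3:
  fixes P :: "'a::euclidean_space measure"
    and p :: "'a \<Rightarrow> real"
    and lam Lam :: real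
    and \<psi> :: "'a \<Rightarrow> real"
  assumes "prob_space P"
    and "p \<in> borel_measurable lborel"
    and "P = density lborel (\<lambda>x. ennreal (p x))"
    and "compact (msupport P)" and "convex (msupport P)"
    and "interior (msupport P) \<noteq> {}"
    and "0 < lam" and "lam \<le> Lam"
    and "\<And>x. x \<in> msupport P \<Longrightarrow> lam \<le> p x \<and> p x \<le> Lam"
    and "convex_on (ball 0 1) \<psi>" and "lsc_on (ball 0 1) \<psi>" and "\<psi> 0 = 0"
    and "AE u in spherical_uniform. \<psi> differentiable (at u)"
    and "distr spherical_uniform borel (grad \<psi>) = P"
  shows "((\<lambda>R. hausdorff_dist (grad \<psi> ` {u \<in> ball 0 R. \<psi> differentiable (at u)})
                               (msupport P)) \<longlongrightarrow> 0) (at_left 1)"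
proof -
  define X where "X = msupport P"
  define U where "U = (spherical_uniform :: 'a measure)"
  define G where "G = grad \<psi>"
  have spP: "space P = UNIV" "sets P = sets borel" using assms(3) by auto
  have P1: "emeasure P UNIV = 1" using prob_space.emeasure_space_1[OF assms(1)] spP by simp
  have spU: "space U = UNIV" "sets U = sets borel" unfolding U_def using su_space su_sets by auto
  have PG: "emeasure P B = emeasure U (G -` B)" if B: "B \<in> sets borel" for B
  proof -
    have "emeasure (distr U borel G) (space borel) \<noteq> 0"
      using assms(14) P1 unfolding U_def G_def by simp
    from emeasure_distr_raw[OF this B] show ?thesis
      using assms(14) spU unfolding U_def G_def by simp
  qed
  have clX: "closed X" using assms(4) compact_imp_closed X_def by auto
  then have Xb: "X \<in> sets borel" by auto
  have nullX: "emeasure P (- X) = 0"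
    unfolding X_def by (rule msupport_compl_null) (use spP clX X_def in auto)
  have "emeasure P (UNIV - (- X)) = emeasure P UNIV - emeasure P (- X)"
    using emeasure_compl[of "- X" P] clX spP nullX by auto
  then have PX: "emeasure P X = 1" using P1 nullX by simp
  have U1: "emeasure U UNIV = 1" using PG[of UNIV] P1 by simp
  have UGX: "emeasure U (G -` X) = 1" using PG[OF Xb] PX by simp
  then have GXs: "G -` X \<in> sets U" by (intro emeasure_neq_0_sets) simp
  have "emeasure U (UNIV - G -` X) = emeasure U UNIV - emeasure U (G -` X)"
    using emeasure_compl[OF GXs] UGX spU by simp
  then have nGX: "emeasure U (UNIV - G -` X) = 0" using U1 UGX by simp
  have AEX: "AE u in U. G u \<in> X"
    by (rule AE_I'[of "UNIV - G -` X"]) (use nGX GXs spU in \<open>auto intro: null_setsI\<close>)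
  have AEgood: "AE u in U. u \<in> ball 0 1 \<and> \<psi> differentiable (at u) \<and> G u \<in> X"
    using AEX su_ball assms(13) unfolding U_def by eventually_elim auto
  have good_in: "\<exists>u\<in>C. u \<in> ball 0 1 \<and> \<psi> differentiable (at u) \<and> G u \<in> X"
    if C: "C \<in> sets borel" "emeasure U C > 0" for C
  proof (rule ccontr)
    assume nC: "\<not> ?thesis"
    from AEgood obtain N where N: "{x \<in> space U. \<not> (x \<in> ball 0 1 \<and> \<psi> differentiable (at x) \<and> G x \<in> X)} \<subseteq> N"
      "emeasure U N = 0" "N \<in> sets U" by (rule AE_E)
    have "C \<subseteq> N" using N(1) nC spU by auto
    then have "emeasure U C \<le> emeasure U N" using N(3) by (intro emeasure_mono)
    then show False using N(2) C(2) by simp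
  qed
  have gradX: "G u \<in> X" if u: "u \<in> ball 0 1" and du: "\<psi> differentiable (at u)" for u
  proof (rule ccontr)
    define g where "g = G u"
    assume "G u \<notin> X"
    then have "g \<notin> X" unfolding g_def .
    from separating_hyperplane_closed_point[OF _ clX this] assms(5)
    obtain a b where ab: "a \<bullet> g < b" "\<And>x. x \<in> X \<Longrightarrow> b < a \<bullet> x" unfolding X_def by auto
    obtain M where M: "M > 0" "\<And>x. x \<in> X \<Longrightarrow> norm x \<le> M"
      using compact_imp_bounded[OF assms(4)] unfolding X_def bounded_pos by auto
    define \<eta> where "\<eta> = b - a \<bullet> g"
    have \<eta>: "\<eta> > 0" using ab unfolding \<eta>_def by simp
    define \<delta> where "\<delta> = 1 - norm u"
    have \<delta>: "\<delta> > 0" using u unfolding \<delta>_def by simp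
    define s where "s = \<delta> / (4 * (norm a + 1))"
    have na: "norm a + 1 > 0" using norm_ge_zero[of a] by linarith
    have s: "s > 0" unfolding s_def using \<delta> na by (intro divide_pos_pos) auto
    have sa: "s * norm a \<le> \<delta> / 4"
    proof -
      have "s * norm a \<le> s * (norm a + 1)" using s by simp
      also have "\<dots> = \<delta> / 4" unfolding s_def using na by (simp add: field_simps)
      finally show ?thesis .
    qed
    define K where "K = M + norm g + 1"
    have K: "K > 0" unfolding K_def using M norm_ge_zero[of g] by linarith
    define r where "r = min (\<delta> / 4) (s * \<eta> / (2 * K))"
    have r: "r > 0" unfolding r_def using \<delta> s \<eta> K by simp
    have rK: "r * K \<le> s * \<eta> / 2"
    proof -
      have "r * K \<le> (s * \<eta> / (2 * K)) * K" using K unfolding r_def by (intro mult_right_mono) auto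
      also have "\<dots> = s * \<eta> / 2" using K by simp
      finally show ?thesis .
    qed
    define c where "c = u - s *\<^sub>R a"
    have sub: "ball c r \<subseteq> ball 0 1"
    proof
      fix y assume "y \<in> ball c r"
      then have "norm (y - c) < r" by (simp add: dist_norm norm_minus_commute)
      moreover have "norm y \<le> norm u + norm (s *\<^sub>R a) + norm (y - c)"
        using norm_triangle_ineq[of "u - s *\<^sub>R a" "y - c"] norm_triangle_ineq4[of u "s *\<^sub>R a"] unfolding c_def by simp
      moreover have "norm (s *\<^sub>R a) \<le> \<delta> / 4" using sa s by simp
      moreover have "r \<le> \<delta> / 4" unfolding r_def by simp
      moreover have "norm u < 1" using u by simp
      ultimately have "norm y < 1" unfolding \<delta>_def by argo
      then show "y \<in> ball 0 1" by simp
    qed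
    have "emeasure U (ball c r) > 0" unfolding U_def by (rule su_pos[OF r sub])
    from good_in[OF _ this] obtain w where w: "w \<in> ball c r" "w \<in> ball 0 1"
      "\<psi> differentiable (at w)" "G w \<in> X" by auto
    have cvx: "convex_on (ball 0 1) \<psi>" by (rule assms(10))
    have t1: "\<psi> w - \<psi> u \<ge> g \<bullet> (w - u)"
      using convex_tangent[OF cvx open_ball convex_ball u w(2)] grad_has[OF du] unfolding g_def G_def by blast
    have t2: "\<psi> u - \<psi> w \<ge> G w \<bullet> (u - w)"
      using convex_tangent[OF cvx open_ball convex_ball w(2) u] grad_has[OF w(3)] unfolding G_def by blast
    define z where "z = w - c"
    have z: "norm z < r" using w(1) unfolding z_def by (simp add: dist_norm norm_minus_commute)
    have wu: "w - u = z - s *\<^sub>R a" unfolding z_def c_def by simp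
    have mono: "G w \<bullet> (w - u) \<ge> g \<bullet> (w - u)"
    proof -
      have "G w \<bullet> (u - w) = - (G w \<bullet> (w - u))" by (simp add: inner_diff_right)
      then show ?thesis using t1 t2 by linarith
    qed
    have GwX: "norm (G w) \<le> M" "b < a \<bullet> G w" using M(2) ab(2) w(4) by auto
    have e1: "G w \<bullet> (w - u) = G w \<bullet> z - s * (a \<bullet> G w)"
      unfolding wu by (simp add: inner_diff_right inner_commute)
    have e2: "g \<bullet> (w - u) = g \<bullet> z - s * (a \<bullet> g)"
      unfolding wu by (simp add: inner_diff_right inner_commute)
    have c1: "G w \<bullet> z \<le> M * r"
    proof -
      have "G w \<bullet> z \<le> norm (G w) * norm z" by (rule norm_cauchy_schwarz)
      also have "\<dots> \<le> M * r" using GwX(1) z M by (intro mult_mono) auto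
      finally show ?thesis .
    qed
    have c2: "g \<bullet> z \<ge> - (norm g * r)"
    proof -
      have "- (g \<bullet> z) \<le> norm g * norm z"
        using norm_cauchy_schwarz[of "-g" z] by simp
      also have "\<dots> \<le> norm g * r" using z by (intro mult_left_mono) auto
      finally show ?thesis by simp
    qed
    have c3: "s * (a \<bullet> G w) > s * b" using s GwX(2) by simp
    have c4: "s * (a \<bullet> g) = s * b - s * \<eta>" unfolding \<eta>_def by (simp add: algebra_simps)
    have "M * r + norm g * r \<le> r * K" unfolding K_def using r by (simp add: algebra_simps)
    then have "M * r + norm g * r \<le> s * \<eta> / 2" using rK by simp
    moreover have "s * \<eta> > 0" using s \<eta> by simp
    ultimately show False using mono e1 e2 c1 c2 c3 c4 by linarith
  qed
  have dense: "\<exists>R0<1. \<forall>x\<in>X. \<exists>w. norm w \<le> R0 \<and> \<psi> differentiable (at w) \<and> dist x (G w) < e"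
    if e: "e > 0" for e
  proof -
    have "X \<subseteq> (\<Union>t\<in>X. ball t (e/2))" using e by auto
    from compactE_image[OF assms(4)[folded X_def] _ this]
    obtain T where T: "T \<subseteq> X" "finite T" "X \<subseteq> (\<Union>t\<in>T. ball t (e/2))" by auto
    have "\<exists>w. w \<in> ball 0 1 \<and> \<psi> differentiable (at w) \<and> G w \<in> ball t (e/2)" if t: "t \<in> T" for t
    proof -
      have "emeasure P (ball t (e/2)) > 0" using T(1) t e unfolding X_def msupport_def by auto
      then have pos: "emeasure U (G -` ball t (e/2)) > 0" using PG[of "ball t (e/2)"] by simp
      then have "G -` ball t (e/2) \<in> sets borel" using spU by (metis emeasure_neq_0_sets less_irrefl)
      from good_in[OF this pos] show ?thesis by auto
    qed
    then obtain W where W: "\<And>t. t \<in> T \<Longrightarrow> W t \<in> ball 0 1 \<and> \<psi> differentiable (at (W t)) \<and> G (W t) \<in> ball t (e/2)"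
      by metis
    define R0 where "R0 = Max (insert 0 ((\<lambda>t. norm (W t)) ` T))"
    have fin: "finite (insert 0 ((\<lambda>t. norm (W t)) ` T))" using T(2) by simp
    have "R0 < 1" unfolding R0_def using fin W by (subst Max_less_iff) auto
    moreover have "\<forall>x\<in>X. \<exists>w. norm w \<le> R0 \<and> \<psi> differentiable (at w) \<and> dist x (G w) < e"
    proof
      fix x assume "x \<in> X"
      then obtain t where t: "t \<in> T" "x \<in> ball t (e/2)" using T(3) by auto
      have "norm (W t) \<le> R0" unfolding R0_def using fin t by (intro Max_ge) auto
      moreover have "dist x (G (W t)) < e"
      proof -
        have "dist x (G (W t)) \<le> dist x t + dist t (G (W t))" by (rule dist_triangle)
        also have "\<dots> < e/2 + e/2" using t W[OF t(1)] by (intro add_strict_mono) (auto simp: dist_commute)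
        finally show ?thesis by simp
      qed
      ultimately show "\<exists>w. norm w \<le> R0 \<and> \<psi> differentiable (at w) \<and> dist x (G w) < e"
        using W[OF t(1)] by blast
    qed
    ultimately show ?thesis by blast
  qed
  define A where "A R = G ` {u \<in> ball 0 R. \<psi> differentiable (at u)}" for R :: real
  define H where "H R = hausdorff_dist (A R) X" for R
  have Xne: "X \<noteq> {}" using assms(6) X_def interior_subset by blast
  have Hge: "H R \<ge> 0" for R
  proof -
    obtain x0 where x0: "x0 \<in> X" using Xne by auto
    have "0 \<le> (INF a\<in>A R. ereal (dist a x0))" by (intro INF_greatest) auto
    also have "\<dots> \<le> (SUP b\<in>X. INF a\<in>A R. ereal (dist a b))" using x0 by (intro SUP_upper)
    also have "\<dots> \<le> H R" unfolding H_def hausdorff_dist_def by simp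
    finally show ?thesis .
  qed
  have Hle: "\<forall>\<^sub>F R in at_left 1. H R \<le> ereal e" if e: "e > 0" for e
  proof -
    obtain R0 where R0: "R0 < 1" "\<And>x. x \<in> X \<Longrightarrow> \<exists>w. norm w \<le> R0 \<and> \<psi> differentiable (at w) \<and> dist x (G w) < e"
      using dense[OF e] by blast
    have ev: "\<forall>\<^sub>F R in at_left 1. R \<in> {R0<..<1}" by (rule eventually_at_left_real[OF R0(1)])
    show ?thesis using ev
    proof eventually_elim
      case (elim R)
      have 1: "(SUP a\<in>A R. INF b\<in>X. ereal (dist a b)) \<le> ereal e"
      proof (rule SUP_least)
        fix a assume "a \<in> A R"
        then obtain u where u: "u \<in> ball 0 R" "\<psi> differentiable (at u)" "a = G u" unfolding A_def by auto
        have "u \<in> ball 0 1" using u(1) elim by auto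
        then have "a \<in> X" using gradX u by auto
        then have "(INF b\<in>X. ereal (dist a b)) \<le> ereal (dist a a)" by (intro INF_lower)
        moreover have "ereal (dist a a) \<le> ereal e" using e by simp
        ultimately show "(INF b\<in>X. ereal (dist a b)) \<le> ereal e" by (rule order_trans)
      qed
      have 2: "(SUP b\<in>X. INF a\<in>A R. ereal (dist a b)) \<le> ereal e"
      proof (rule SUP_least)
        fix x assume x: "x \<in> X"
        then obtain w where w: "norm w \<le> R0" "\<psi> differentiable (at w)" "dist x (G w) < e" using R0(2) by blast
        have "G w \<in> A R" unfolding A_def using w elim by auto
        then have "(INF a\<in>A R. ereal (dist a x)) \<le> ereal (dist (G w) x)" by (intro INF_lower)
        also have "\<dots> \<le> ereal e" using w(3) by (simp add: dist_commute)
        finally show "(INF a\<in>A R. ereal (dist a x)) \<le> ereal e" .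
      qed
      show ?case unfolding H_def hausdorff_dist_def using 1 2 by simp
    qed
  qed
  have "(H \<longlongrightarrow> 0) (at_left 1)"
  proof (rule order_tendstoI)
    fix y :: ereal assume "y < 0"
    then have "\<And>R. y < H R" using Hge by (rule less_le_trans)
    then show "\<forall>\<^sub>F R in at_left 1. y < H R" by (intro always_eventually) blast
  next
    fix y :: ereal assume "0 < y"
    then obtain e where e: "0 < ereal e" "ereal e < y" using ereal_dense2 by blast
    then have "e > 0" by simp
    from Hle[OF this] show "\<forall>\<^sub>F R in at_left 1. H R < y"
      by eventually_elim (use e in auto)
  qed
  then show ?thesis unfolding H_def A_def X_def G_def .
qed

end
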